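(* For every integer $k\geq 1$ there exist $n$ and a connected $k$-colouring of the edges of $K_n^{(3)}$ with no multicoloured $4$-set.
   Context: $K_n^{(3)}$ is the complete $3$-uniform hypergraph on $n$ vertices (edges are all $3$-subsets). A strong path in a $3$-uniform hypergraph $H$ is a sequence of edges $E_1,\dots,E_m$ of $H$ with $|E_t\cap E_{t+1}|=2$ for all $t$. $H$ is connected if for any two $2$-subsets $\{u,v\},\{u',v'\}$ of $V(H)$ there is a strong path $E_1,\dots,E_m$ in $H$ with $\{u,v\}\subseteq E_1$ and $\{u',v'\}\subseteq E_m$. A $k$-colouring of the edges of $K_n^{(3)}$ is connected if for each colour, the $3$-graph on all $n$ vertices formed by the edges of that colour is connected. A $4$-set of vertices is multicoloured if its four $3$-subsets receive four distinct colours. *)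

theory Defs
  imports Main
begin

text \<open>A 3-uniform hypergraph on vertex set V is given by its edge set H (a set of 3-subsets of V).\<close>

definition strong_path :: "'a set set \<Rightarrow> 'a set list \<Rightarrow> bool" where
  "strong_path H Es \<longleftrightarrow> Es \<noteq> [] \<and> set Es \<subseteq> H \<and>
     (\<forall>t. Suc t < length Es \<longrightarrow> card (Es ! t \<inter> Es ! Suc t) = 2)"

definition hconnected :: "'a set \<Rightarrow> 'a set set \<Rightarrow> bool" where
  "hconnected V H \<longleftrightarrow>
     (\<forall>P Q. P \<subseteq> V \<and> card P = 2 \<and> Q \<subseteq> V \<and> card Q = 2 \<longrightarrow>
        (\<exists>Es. strong_path H Es \<and> P \<subseteq> hd Es \<and> Q \<subseteq> last Es))"

definition triples :: "'a set \<Rightarrow> 'a set set" where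
  "triples V = {E. E \<subseteq> V \<and> card E = 3}"

definition is_colouring :: "'a set \<Rightarrow> nat \<Rightarrow> ('a set \<Rightarrow> nat) \<Rightarrow> bool" where
  "is_colouring V k c \<longleftrightarrow> (\<forall>E\<in>triples V. c E < k)"

definition connected_colouring :: "'a set \<Rightarrow> nat \<Rightarrow> ('a set \<Rightarrow> nat) \<Rightarrow> bool" where
  "connected_colouring V k c \<longleftrightarrow> is_colouring V k c \<and>
     (\<forall>i<k. hconnected V {E\<in>triples V. c E = i})"

definition multicoloured :: "('a set \<Rightarrow> nat) \<Rightarrow> 'a set \<Rightarrow> bool" where
  "multicoloured c S \<longleftrightarrow> card (c ` {E. E \<subseteq> S \<and> card E = 3}) = 4"

end

theory Submission
  imports Defs
begin


lemma lt7: "(x::nat) < 7 \<Longrightarrow> x = 0 \<or> x = 1 \<or> x = 2 \<or> x = 3 \<or> x = 4 \<or> x = 5 \<or> x = 6"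
  by arith

definition Bt :: "nat \<Rightarrow> nat \<Rightarrow> bool" where
  "Bt u v \<longleftrightarrow> u \<noteq> v \<and> ((u mod 7 = v mod 7 \<and> u < v) \<or> (v mod 7 + 7 - u mod 7) mod 7 \<in> {1,2,4})"

lemma res_lemma: assumes "(x::nat) < 7" "y < 7" "x \<noteq> y" shows
   "((y + 7 - x) mod 7 \<in> {1,2,4}) \<longleftrightarrow> \<not> ((x + 7 - y) mod 7 \<in> {1,2,4})"
  using lt7[OF assms(1)] lt7[OF assms(2)] assms(3) by (elim disjE, simp_all)

lemma dom_lemma: assumes "(x::nat) < 7" "y < 7" shows
   "\<exists>z<7. (x + 7 - z) mod 7 \<in> {1,2,4} \<and> (y + 7 - z) mod 7 \<in> {1,2,4}"
  using lt7[OF assms(1)] lt7[OF assms(2)] apply (elim disjE)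
  apply ((rule exI[where x=0], simp; fail) | (rule exI[where x=1], simp; fail) | (rule exI[where x=2], simp; fail) | (rule exI[where x=3], simp; fail) | (rule exI[where x=4], simp; fail) | (rule exI[where x=5], simp; fail) | (rule exI[where x=6], simp; fail))+
  done

lemma Bt_asym: "u \<noteq> v \<Longrightarrow> Bt v u \<longleftrightarrow> \<not> Bt u v"
proof -
  assume uv: "u \<noteq> v"
  show ?thesis
  proof (cases "u mod 7 = v mod 7")
    case True thus ?thesis using uv by (auto simp: Bt_def)
  next
    case False
    thus ?thesis using uv res_lemma[of "u mod 7" "v mod 7"] by (auto simp: Bt_def)
  qed
qed

definition pk :: "nat \<Rightarrow> nat \<Rightarrow> nat \<Rightarrow> nat" where
  "pk a b c = (if Bt a b \<and> Bt a c then a else if Bt b a \<and> Bt b c then b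
     else if Bt c a \<and> Bt c b then c else if Bt b a then b else c)"

lemma pk4: "distinct [a,b,c,d] \<Longrightarrow> \<not> distinct [pk a b c, pk a b d, pk a c d, pk b c d]"
  apply (cases "Bt a b"; cases "Bt a c"; cases "Bt a d"; cases "Bt b c"; cases "Bt b d"; cases "Bt c d")
  apply (simp_all add: pk_def Bt_asym[of a b] Bt_asym[of a c] Bt_asym[of a d] Bt_asym[of b c] Bt_asym[of b d] Bt_asym[of c d])
  done


lemma pk_in: "pk a b c \<in> {a,b,c}" by (simp add: pk_def)

definition pick :: "nat set \<Rightarrow> nat" where
  "pick E = pk (Min E) (Min (E - {Min E})) (Max E)"

definition col :: "nat set \<Rightarrow> nat" where
  "col E = pick E div 7"

lemma sort3: assumes "card E = 3" shows "\<exists>a b c. a<b \<and> b<c \<and> E = {a,b,c::nat}"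
proof -
  have f: "finite E" using assms card.infinite by fastforce
  define l where "l = sorted_list_of_set E"
  have s: "sorted_wrt (<) l" "set l = E" "length l = 3" using f assms by (simp_all add: l_def)
  then obtain a b c where "l = [a,b,c]" by (auto simp: numeral_eq_Suc length_Suc_conv)
  thus ?thesis using s by auto
qed

lemma sort4: assumes "card E = 4" shows "\<exists>a b c d. a<b \<and> b<c \<and> c<d \<and> E = {a,b,c,d::nat}"
proof -
  have f: "finite E" using assms card.infinite by fastforce
  define l where "l = sorted_list_of_set E"
  have s: "sorted_wrt (<) l" "set l = E" "length l = 4" using f assms by (simp_all add: l_def)
  then obtain a b c d where "l = [a,b,c,d]" by (auto simp: numeral_eq_Suc length_Suc_conv)
  thus ?thesis using s by auto
qed

lemma pick3: assumes "a<b" "b<c" shows "pick {a,b,c} = pk a b c"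
proof -
  have 1: "Min {a,b,c} = a" using assms by (simp add: min_def)
  have 2: "{a,b,c} - {a} = {b,c}" using assms by auto
  have 3: "Min {b,c} = b" "Max {a,b,c} = c" using assms by (simp_all add: min_def max_def)
  show ?thesis unfolding pick_def 1 2 3 ..
qed

lemma pick_in: "card E = 3 \<Longrightarrow> pick E \<in> E"
  using sort3 pick3 pk_in by metis

lemma pick_source: assumes "card E = 3" "s \<in> E" "\<forall>x\<in>E-{s}. Bt s x" shows "pick E = s"
proof -
  obtain a b c where abc: "a<b" "b<c" "E = {a,b,c}" using sort3[OF assms(1)] by blast
  have d: "a \<noteq> b" "a \<noteq> c" "b \<noteq> c" using abc by auto
  have "s = a \<or> s = b \<or> s = c" using assms(2) abc by auto
  hence "pk a b c = s"
  proof (elim disjE)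
    assume "s = a" thus ?thesis using assms(3) abc d by (simp add: pk_def)
  next
    assume "s = b" thus ?thesis using assms(3) abc d Bt_asym[of a b] by (simp add: pk_def)
  next
    assume "s = c" thus ?thesis using assms(3) abc d Bt_asym[of a c] Bt_asym[of b c] by (simp add: pk_def)
  qed
  thus ?thesis using pick3 abc by simp
qed

lemma subsets4: assumes "a<b" "b<c" "c<(d::nat)"
  shows "{E. E \<subseteq> {a,b,c,d} \<and> card E = 3} = {{a,b,c},{a,b,d},{a,c,d},{b,c,d}}"
proof
  show "{E. E \<subseteq> {a,b,c,d} \<and> card E = 3} \<subseteq> {{a,b,c},{a,b,d},{a,c,d},{b,c,d}}"
  proof
    fix E assume "E \<in> {E. E \<subseteq> {a,b,c,d} \<and> card E = 3}"
    hence E: "E \<subseteq> {a,b,c,d}" "card E = 3" by auto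
    have "card {a,b,c,d} = 4" using assms by simp
    moreover have "finite E" using E(1) finite_subset by blast
    ultimately have "card ({a,b,c,d} - E) = 1" using E card_Diff_subset[of E "{a,b,c,d}"] by simp
    then obtain x where x: "{a,b,c,d} - E = {x}" by (meson card_1_singletonE)
    hence "E = {a,b,c,d} - {x}" "x \<in> {a,b,c,d}" using E by auto
    thus "E \<in> {{a,b,c},{a,b,d},{a,c,d},{b,c,d}}" using assms by auto
  qed
next
  show "{{a,b,c},{a,b,d},{a,c,d},{b,c,d}} \<subseteq> {E. E \<subseteq> {a,b,c,d} \<and> card E = 3}"
    using assms by auto
qed

lemma card4_distinct: "card {w,x,y,z} = 4 \<Longrightarrow> distinct [w,x,y,z]"
  by (auto simp: card_insert_if split: if_splits)

lemma card3_le: "card {x,y,z} \<le> 3"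
  by (simp add: card_insert_if)



definition conn :: "nat set set \<Rightarrow> nat set \<Rightarrow> nat set \<Rightarrow> bool" where
  "conn H P Q \<longleftrightarrow> (\<exists>Es. strong_path H Es \<and> P \<subseteq> hd Es \<and> Q \<subseteq> last Es)"

lemma conn_single: "E \<in> H \<Longrightarrow> P \<subseteq> E \<Longrightarrow> Q \<subseteq> E \<Longrightarrow> conn H P Q"
  unfolding conn_def strong_path_def by (rule exI[of _ "[E]"]) auto

lemma sp_append:
  assumes xs: "strong_path H xs" and ys: "strong_path H ys" and c: "card (last xs \<inter> hd ys) = 2"
  shows "strong_path H (xs @ ys)"
  unfolding strong_path_def
proof (intro conjI allI impI)
  show "xs @ ys \<noteq> []" using xs by (simp add: strong_path_def)
  show "set (xs @ ys) \<subseteq> H" using xs ys by (simp add: strong_path_def)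
  fix t assume t: "Suc t < length (xs @ ys)"
  have nx: "xs \<noteq> []" and ny: "ys \<noteq> []" using xs ys by (auto simp: strong_path_def)
  consider "Suc t < length xs" | "Suc t = length xs" | "length xs \<le> t" by linarith
  thus "card ((xs @ ys) ! t \<inter> (xs @ ys) ! Suc t) = 2"
  proof cases
    case 1 thus ?thesis using xs by (simp add: nth_append strong_path_def)
  next
    case 2
    have "t = length xs - 1" using 2 by simp
    hence "(xs @ ys) ! t = last xs" using 2 nx by (simp add: nth_append last_conv_nth)
    moreover have "(xs @ ys) ! Suc t = hd ys" using 2 ny by (simp add: nth_append hd_conv_nth)
    ultimately show ?thesis using c by simp
  next
    case 3
    have "Suc (t - length xs) < length ys" using 3 t by simp
    hence "card (ys ! (t - length xs) \<inter> ys ! Suc (t - length xs)) = 2" using ys by (simp add: strong_path_def)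
    moreover have "Suc t - length xs = Suc (t - length xs)" using 3 by simp
    ultimately show ?thesis using 3 by (simp add: nth_append)
  qed
qed

lemma sp_tl: assumes "strong_path H Es" "tl Es \<noteq> []" shows "strong_path H (tl Es)"
  using assms unfolding strong_path_def
  by (auto simp: nth_tl dest: list.set_sel(2))

lemma sp_rev: assumes "strong_path H Es" shows "strong_path H (rev Es)"
  unfolding strong_path_def
proof (intro conjI allI impI)
  show "rev Es \<noteq> []" "set (rev Es) \<subseteq> H" using assms by (auto simp: strong_path_def)
  fix t assume t: "Suc t < length (rev Es)"
  define s where "s = length Es - Suc (Suc t)"
  have s1: "Suc s < length Es" using t by (simp add: s_def)
  have "card (Es ! s \<inter> Es ! Suc s) = 2" using assms s1 by (simp add: strong_path_def)
  moreover have "rev Es ! t = Es ! Suc s" "rev Es ! Suc t = Es ! s" using t by (simp_all add: rev_nth s_def Suc_diff_Suc)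
  ultimately show "card (rev Es ! t \<inter> rev Es ! Suc t) = 2" by (simp add: Int_commute)
qed

lemma conn_sym: "conn H P Q \<Longrightarrow> conn H Q P"
  unfolding conn_def
  by (metis sp_rev hd_rev last_rev)

lemma conn_trans:
  assumes H3: "\<forall>E\<in>H. card E = 3" and R: "card R = 2"
    and PR: "conn H P R" and RQ: "conn H R Q"
  shows "conn H P Q"
proof -
  obtain Es1 where E1: "strong_path H Es1" "P \<subseteq> hd Es1" "R \<subseteq> last Es1" using PR conn_def by blast
  obtain Es2 where E2: "strong_path H Es2" "R \<subseteq> hd Es2" "Q \<subseteq> last Es2" using RQ conn_def by blast
  have n1: "Es1 \<noteq> []" and n2: "Es2 \<noteq> []" using E1 E2 by (auto simp: strong_path_def)
  have L: "last Es1 \<in> H" using E1(1) n1 by (auto simp: strong_path_def)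
  have F: "hd Es2 \<in> H" using E2(1) n2 by (auto simp: strong_path_def)
  show ?thesis
  proof (cases "last Es1 = hd Es2")
    case True
    show ?thesis
    proof (cases "tl Es2 = []")
      case True
      hence "last Es2 = hd Es2" using n2 by (metis last_ConsL list.collapse)
      thus ?thesis using E1 E2 \<open>last Es1 = hd Es2\<close> conn_def by metis
    next
      case False
      have sp: "strong_path H (tl Es2)" using sp_tl E2(1) False by blast
      have "Suc 0 < length Es2" using False n2 by (cases Es2) auto
      hence "card (Es2 ! 0 \<inter> Es2 ! Suc 0) = 2" using E2(1) by (simp add: strong_path_def)
      moreover have "tl Es2 ! 0 = Es2 ! Suc 0" using False by (cases Es2) auto
      ultimately have "card (last Es1 \<inter> hd (tl Es2)) = 2" using True False n2
        by (simp add: hd_conv_nth)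
      hence "strong_path H (Es1 @ tl Es2)" using sp_append E1(1) sp by blast
      moreover have "hd (Es1 @ tl Es2) = hd Es1" using n1 by simp
      moreover have "last (Es1 @ tl Es2) = last Es2" using False n2 by (simp add: last_tl)
      ultimately show ?thesis using E1 E2 conn_def by metis
    qed
  next
    case False
    have c3: "card (last Es1) = 3" "card (hd Es2) = 3" using H3 L F by auto
    have fin: "finite (last Es1)" using c3 card.infinite by fastforce
    have sub: "R \<subseteq> last Es1 \<inter> hd Es2" using E1 E2 by auto
    have "card R \<le> card (last Es1 \<inter> hd Es2)" using sub fin by (intro card_mono) auto
    moreover have le3: "card (last Es1 \<inter> hd Es2) \<le> 3" using fin c3 card_mono[of "last Es1" "last Es1 \<inter> hd Es2"] by auto
    moreover have "card (last Es1 \<inter> hd Es2) \<noteq> 3"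
    proof
      assume a: "card (last Es1 \<inter> hd Es2) = 3"
      have "last Es1 \<inter> hd Es2 = last Es1" using card_subset_eq[OF fin, of "last Es1 \<inter> hd Es2"] a c3 by auto
      moreover have "finite (hd Es2)" using c3 card.infinite by fastforce
      hence "last Es1 \<inter> hd Es2 = hd Es2" using card_subset_eq[of "hd Es2" "last Es1 \<inter> hd Es2"] a c3 by auto
      ultimately show False using False by simp
    qed
    ultimately have "card (last Es1 \<inter> hd Es2) = 2" using R by linarith
    hence "strong_path H (Es1 @ Es2)" using sp_append E1(1) E2(1) by blast
    thus ?thesis using E1 E2 n1 n2 conn_def by (metis hd_append2 last_append)
  qed
qed



lemma dominator: "\<exists>w. w div 7 = i \<and> Bt w u \<and> Bt w v"
proof -
  obtain z where z: "z < 7" "(u mod 7 + 7 - z) mod 7 \<in> {1,2,4}" "(v mod 7 + 7 - z) mod 7 \<in> {1,2,4}"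
    using dom_lemma[of "u mod 7" "v mod 7"] by auto
  define w where "w = 7 * i + z"
  have wm: "w mod 7 = z" "w div 7 = i" using z(1) by (simp_all add: w_def)
  have wu: "w \<noteq> u"
  proof
    assume "w = u" hence "u mod 7 = z" using wm by simp
    thus False using z(2) by simp
  qed
  have wv: "w \<noteq> v"
  proof
    assume "w = v" hence "v mod 7 = z" using wm by simp
    thus False using z(3) by simp
  qed
  have "Bt w u" unfolding Bt_def using wu z(2) wm(1) by simp
  moreover have "Bt w v" unfolding Bt_def using wv z(3) wm(1) by simp
  ultimately show ?thesis using wm(2) by blast
qed

lemma divI7: "7*i \<le> (x::nat) \<Longrightarrow> x < 7*i+7 \<Longrightarrow> x div 7 = i"
  by (rule div_nat_eqI) simp_all

lemma Bt_irrefl: "Bt u v \<Longrightarrow> u \<noteq> v" by (simp add: Bt_def)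

lemma div_lt: "(w::nat) div 7 = i \<Longrightarrow> i < k \<Longrightarrow> w < 7 * k"
  using div_less_iff_less_mult[of 7 w k] by (simp add: mult.commute)

lemma extend3:
  assumes "finite (X::nat set)" "X \<subseteq> C" "card X \<le> 3" "finite C" "7 \<le> card C"
  shows "\<exists>E. X \<subseteq> E \<and> E \<subseteq> C \<and> card E = 3"
proof -
  have "card (C - X) \<ge> 3 - card X" using assms card_Diff_subset[of X C] by simp
  then obtain T where T: "T \<subseteq> C - X" "card T = 3 - card X" "finite T"
    using obtain_subset_with_card_n by metis
  have "card (X \<union> T) = card X + card T" using T assms(1) by (intro card_Un_disjoint) auto
  thus ?thesis using T assms by (intro exI[of _ "X \<union> T"]) auto
qed

context
  fixes k i :: nat
  assumes ik: "i < k"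
begin

definition HH :: "nat set set" where "HH = {E \<in> triples {..<7*k}. col E = i}"

lemma HH3: "\<forall>E\<in>HH. card E = 3" by (simp add: HH_def triples_def)

lemma inC: "E \<subseteq> {7*i..<7*i+7} \<Longrightarrow> card E = 3 \<Longrightarrow> E \<in> HH"
proof -
  assume E: "E \<subseteq> {7*i..<7*i+7}" "card E = 3"
  have "pick E \<in> E" using pick_in E by blast
  hence "col E = i" using E divI7 unfolding col_def by (meson atLeastLessThan_iff subsetD)
  moreover have "E \<subseteq> {..<7*k}" using E ik by auto
  ultimately show ?thesis using E by (simp add: HH_def triples_def)
qed

lemma inC_ex: "X \<subseteq> {7*i..<7*i+7} \<Longrightarrow> finite X \<Longrightarrow> card X \<le> 3 \<Longrightarrow> \<exists>E\<in>HH. X \<subseteq> E"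
proof -
  assume a: "X \<subseteq> {7*i..<7*i+7}" "finite X" "card X \<le> 3"
  have "7 \<le> card {7*i..<7*i+7}" by simp
  then obtain E where E: "X \<subseteq> E" "E \<subseteq> {7*i..<7*i+7}" "card E = 3"
    using extend3[OF a(2) a(1) a(3)] by blast
  thus ?thesis using inC by blast
qed

abbreviation "P0 \<equiv> {7*i, 7*i+1}"

lemma connA: assumes "a div 7 = i" "b div 7 = i" "a \<noteq> b" shows "conn HH {a,b} P0"
proof -
  have C: "a \<in> {7*i..<7*i+7}" "b \<in> {7*i..<7*i+7}" "7*i \<in> {7*i..<7*i+7}" "7*i+1 \<in> {7*i..<7*i+7}"
    using assms by auto
  have X1: "{a,b,7*i+1} \<subseteq> {7*i..<7*i+7}" "{a,b,7*i} \<subseteq> {7*i..<7*i+7}" "{b,7*i,7*i+1} \<subseteq> {7*i..<7*i+7}"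
    using C by (simp_all only: insert_subset empty_subsetI simp_thms)
  show ?thesis
  proof (cases "b = 7*i")
    case True
    obtain E where "E \<in> HH" "{a,b,7*i+1} \<subseteq> E" using inC_ex[OF X1(1) _ card3_le] by blast
    thus ?thesis using True by (intro conn_single[of E]) auto
  next
    case False
    obtain E where E: "E \<in> HH" "{a,b,7*i} \<subseteq> E" using inC_ex[OF X1(2) _ card3_le] by blast
    obtain E' where E': "E' \<in> HH" "{b,7*i,7*i+1} \<subseteq> E'" using inC_ex[OF X1(3) _ card3_le] by blast
    have 1: "conn HH {a,b} {b,7*i}" using E by (intro conn_single[of E]) auto
    have 2: "conn HH {b,7*i} P0" using E' by (intro conn_single[of E']) auto
    have c2: "card {b,7*i} = 2" using False by simp
    show ?thesis using conn_trans[OF HH3 c2 1 2] .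
  qed
qed

lemma tripleH: assumes "u < 7*k" "v < 7*k" "w div 7 = i" "Bt w u" "Bt w v" "u \<noteq> v"
  shows "{u,v,w} \<in> HH"
proof -
  have d: "w \<noteq> u" "w \<noteq> v" using assms Bt_irrefl by auto
  hence c: "card {u,v,w} = 3" using assms(6) by simp
  have "\<forall>x\<in>{u,v,w}-{w}. Bt w x" using assms(4,5) by blast
  hence p: "pick {u,v,w} = w" using pick_source[OF c] by blast
  have "w < 7*k" using div_lt[OF assms(3) ik] .
  hence s: "{u,v,w} \<subseteq> {..<7*k}" using assms(1,2) by simp
  have "col {u,v,w} = i" unfolding col_def p using assms(3) .
  thus ?thesis using s c unfolding HH_def triples_def by blast
qed

lemma connB: assumes "u < 7*k" "w div 7 = i" "u \<noteq> w" shows "conn HH {u,w} P0"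
proof -
  obtain w' where w': "w' div 7 = i" "Bt w' u" "Bt w' w" using dominator by blast
  have ww: "w < 7*k" using div_lt[OF assms(2) ik] .
  have "{u,w,w'} \<in> HH" using tripleH[OF assms(1) ww w'] assms(3) by blast
  hence 1: "conn HH {u,w} {w,w'}" by (intro conn_single) auto
  have ne: "w \<noteq> w'" using w' Bt_irrefl by blast
  have 2: "conn HH {w,w'} P0" using connA assms(2) w'(1) ne by blast
  have c2: "card {w,w'} = 2" using ne by simp
  show ?thesis using conn_trans[OF HH3 c2 1 2] .
qed

lemma connC: assumes "u < 7*k" "v < 7*k" "u \<noteq> v" shows "conn HH {u,v} P0"
proof -
  obtain w where w: "w div 7 = i" "Bt w u" "Bt w v" using dominator by blast
  have "{u,v,w} \<in> HH" using tripleH[OF assms(1,2) w assms(3)] .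
  hence 1: "conn HH {u,v} {u,w}" by (intro conn_single) auto
  have ne: "u \<noteq> w" using w Bt_irrefl by blast
  have 2: "conn HH {u,w} P0" using connB assms(1) w(1) ne by blast
  have c2: "card {u,w} = 2" using ne by simp
  show ?thesis using conn_trans[OF HH3 c2 1 2] .
qed

lemma hconn: "hconnected {..<7*k} HH"
  unfolding hconnected_def
proof (intro allI impI)
  fix P Q assume a: "P \<subseteq> {..<7*k} \<and> card P = 2 \<and> Q \<subseteq> {..<7*k} \<and> card Q = 2"
  have a1: "P \<subseteq> {..<7*k}" "card P = 2" "Q \<subseteq> {..<7*k}" "card Q = 2" using a by blast+
  obtain u v where P: "P = {u,v}" "u \<noteq> v" using a1(2) unfolding card_2_iff by blast
  obtain u' v' where Q: "Q = {u',v'}" "u' \<noteq> v'" using a1(4) unfolding card_2_iff by blast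
  have "{u,v} \<subseteq> {..<7*k}" "{u',v'} \<subseteq> {..<7*k}" using a1(1,3) P(1) Q(1) by blast+
  hence uv: "u < 7*k" "v < 7*k" "u' < 7*k" "v' < 7*k" by simp_all
  have 1: "conn HH P P0" using connC[OF uv(1,2) P(2)] P(1) by simp
  have 2: "conn HH P0 Q" using connC[OF uv(3,4) Q(2)] Q(1) conn_sym by blast
  have c2: "card P0 = 2" by simp
  have "conn HH P Q" using conn_trans[OF HH3 c2 1 2] .
  thus "\<exists>Es. strong_path HH Es \<and> P \<subseteq> hd Es \<and> Q \<subseteq> last Es" by (simp add: conn_def)
qed

end

lemma colouring_ok: "connected_colouring {..<7*k} k col"
    unfolding connected_colouring_def is_colouring_def
  proof (intro conjI ballI allI impI)
    fix E assume "E \<in> triples {..<7*k}"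
    hence "pick E \<in> E" "E \<subseteq> {..<7*k}" using pick_in by (auto simp: triples_def)
    hence "pick E < 7 * k" by blast
    thus "col E < k" unfolding col_def using div_less_iff_less_mult[of 7 "pick E" k] by (simp add: mult.commute)
  next
    fix i assume "i < k"
    thus "hconnected {..<7*k} {E \<in> triples {..<7*k}. col E = i}"
      using hconn[of i k] by (simp add: HH_def)
  qed

lemma no_multi: assumes S: "card S = 4" shows "\<not> multicoloured col S"
proof
  obtain a b c d where abcd: "a<b" "b<c" "c<d" "S = {a,b,c,d}" using sort4 S by blast
  assume "multicoloured col S"
  hence "card (col ` {{a,b,c},{a,b,d},{a,c,d},{b,c,d}}) = 4"
    using subsets4[OF abcd(1-3)] abcd(4) by (simp add: multicoloured_def)
  moreover have "col ` {{a,b,c},{a,b,d},{a,c,d},{b,c,d}} = {pk a b c div 7, pk a b d div 7, pk a c d div 7, pk b c d div 7}"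
    using abcd(1-3) by (simp add: col_def pick3)
  ultimately have "card {pk a b c div 7, pk a b d div 7, pk a c d div 7, pk b c d div 7} = 4"
    by simp
  hence "distinct [pk a b c div 7, pk a b d div 7, pk a c d div 7, pk b c d div 7]"
    by (rule card4_distinct)
  hence "distinct [pk a b c, pk a b d, pk a c d, pk b c d]" by auto
  moreover have "distinct [a,b,c,d]" using abcd by auto
  ultimately show False using pk4 by blast
qed

theorem theorem9:
  fixes k :: nat
  assumes "k \<ge> 1"
  shows "\<exists>(n::nat) (c :: nat set \<Rightarrow> nat). n \<ge> 3 \<and> connected_colouring {..<n} k c \<and>
           (\<forall>S. S \<subseteq> {..<n} \<and> card S = 4 \<longrightarrow> \<not> multicoloured c S)"
proof -
  have "3 \<le> 7*k" using assms by simp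
  thus ?thesis using colouring_ok[of k] no_multi by blast
qed

end
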